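(* Let $H$ be a finite non-cyclic subgroup of $\mathrm{GL}(2,\mathbb{C})$ and $L:\mathcal{A}_2\to\mathrm{GL}(2,\mathbb{C})$ the linear-part morphism. Then the derived subgroup of $L^{-1}(H)=H\ltimes\mathbb{C}^2$ equals $D(H)\ltimes\mathbb{C}^2=L^{-1}(D(H))$.
   Context: $\mathcal{A}_2$ is the group of affine automorphisms $v\mapsto Mv+w$ of $\mathbb{C}^2$ ($M\in\mathrm{GL}(2,\mathbb{C})$, $w\in\mathbb{C}^2$), $L(v\mapsto Mv+w)=M$, and $\mathbb{C}^2\subseteq\mathcal{A}_2$ denotes the subgroup of translations. $D(H)$ denotes the subgroup generated by all commutators $ghg^{-1}h^{-1}$ of elements of $H$. *)

theory Defs
  imports "HOL-Analysis.Analysis" "HOL-Algebra.Elementary_Groups" "HOL-Algebra.Generated_Groups"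
begin

definition GL2 :: "(complex^2^2) monoid" where
  "GL2 = \<lparr>carrier = {M. invertible M}, mult = (\<lambda>A B. A ** B), one = mat 1\<rparr>"

definition Aff2 :: "(complex^2 \<Rightarrow> complex^2) monoid" where
  "Aff2 = \<lparr>carrier = {f. \<exists>M w. invertible M \<and> f = (\<lambda>v. M *v v + w)},
           mult = (\<lambda>f g. f \<circ> g), one = id\<rparr>"

text \<open>Linear part L(v |-> M v + w) = M.\<close>
definition Lin :: "(complex^2 \<Rightarrow> complex^2) \<Rightarrow> complex^2^2" where
  "Lin f = matrix (\<lambda>v. f v - f 0)"

definition Lpre :: "(complex^2^2) set \<Rightarrow> (complex^2 \<Rightarrow> complex^2) set" where
  "Lpre K = {f \<in> carrier Aff2. Lin f \<in> K}"

end

theory Submission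
  imports Defs "HOL-Algebra.Multiplicative_Group"
begin

definition aff :: "complex^2^2 \<Rightarrow> complex^2 \<Rightarrow> (complex^2 \<Rightarrow> complex^2)" where
  "aff M w = (\<lambda>v. M *v v + w)"

lemma aff_comp: "aff M w \<circ> aff N z = aff (M ** N) (M *v z + w)"
  by (auto simp: aff_def fun_eq_iff matrix_vector_right_distrib matrix_vector_mul_assoc)

lemma Lin_aff[simp]: "Lin (aff M w) = M"
  by (simp add: Lin_def aff_def)

lemma aff_eq: "aff M w = aff N z \<longleftrightarrow> M = N \<and> w = z"
proof
  assume h: "aff M w = aff N z"
  hence "w = z" by (metis aff_def add_0 matrix_vector_mult_0_right)
  moreover hence "M = N" using h by (metis Lin_aff)
  ultimately show "M = N \<and> w = z" by simp
qed simp

lemma carrier_Aff2: "f \<in> carrier Aff2 \<longleftrightarrow> (\<exists>M w. invertible M \<and> f = aff M w)"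
  by (simp add: Aff2_def aff_def)

lemma mult_Aff2[simp]: "f \<otimes>\<^bsub>Aff2\<^esub> g = f \<circ> g" by (simp add: Aff2_def)
lemma one_Aff2[simp]: "\<one>\<^bsub>Aff2\<^esub> = id" by (simp add: Aff2_def)
lemma mult_GL2[simp]: "A \<otimes>\<^bsub>GL2\<^esub> B = A ** B" by (simp add: GL2_def)
lemma one_GL2[simp]: "\<one>\<^bsub>GL2\<^esub> = mat 1" by (simp add: GL2_def)
lemma carrier_GL2: "A \<in> carrier GL2 \<longleftrightarrow> invertible A" by (simp add: GL2_def)

lemma invertible_one: "invertible (mat 1 :: complex^2^2)"
  unfolding invertible_def by (intro exI[of _ "mat 1"]) simp

lemma invertibleI: "A ** B = mat 1 \<Longrightarrow> B ** A = mat 1 \<Longrightarrow> invertible (A::complex^2^2)"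
  unfolding invertible_def by blast

lemma id_aff: "id = aff (mat 1) 0"
  by (simp add: aff_def fun_eq_iff)

lemma group_GL2: "group GL2"
proof (rule groupI)
  show "\<And>x y. x \<in> carrier GL2 \<Longrightarrow> y \<in> carrier GL2 \<Longrightarrow> x \<otimes>\<^bsub>GL2\<^esub> y \<in> carrier GL2"
    by (simp add: GL2_def invertible_mult)
  show "\<one>\<^bsub>GL2\<^esub> \<in> carrier GL2" by (simp add: GL2_def invertible_def)
  show "\<And>x y z. x \<in> carrier GL2 \<Longrightarrow> y \<in> carrier GL2 \<Longrightarrow> z \<in> carrier GL2 \<Longrightarrow>
      x \<otimes>\<^bsub>GL2\<^esub> y \<otimes>\<^bsub>GL2\<^esub> z = x \<otimes>\<^bsub>GL2\<^esub> (y \<otimes>\<^bsub>GL2\<^esub> z)"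
    by (simp add: GL2_def matrix_mul_assoc)
  show "\<And>x. x \<in> carrier GL2 \<Longrightarrow> \<one>\<^bsub>GL2\<^esub> \<otimes>\<^bsub>GL2\<^esub> x = x"
    by (simp add: GL2_def)
  show "\<And>x. x \<in> carrier GL2 \<Longrightarrow> \<exists>y\<in>carrier GL2. y \<otimes>\<^bsub>GL2\<^esub> x = \<one>\<^bsub>GL2\<^esub>"
    by (simp add: GL2_def invertible_def) blast
qed

lemma inv_GL2: assumes "M ** M' = mat 1" "M' ** M = mat 1"
  shows "inv\<^bsub>GL2\<^esub> M = M'"
proof -
  have "M \<in> carrier GL2" "M' \<in> carrier GL2" using invertibleI[OF assms] invertibleI[OF assms(2,1)] by (auto simp: carrier_GL2)
  thus ?thesis using group.inv_equality[OF group_GL2, of M' M] assms by (simp add: GL2_def)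
qed

lemma group_Aff2: "group Aff2"
proof (rule groupI)
  show "\<And>x y. x \<in> carrier Aff2 \<Longrightarrow> y \<in> carrier Aff2 \<Longrightarrow> x \<otimes>\<^bsub>Aff2\<^esub> y \<in> carrier Aff2"
  proof -
    fix x y assume "x \<in> carrier Aff2" "y \<in> carrier Aff2"
    then obtain M w N z where MN: "invertible M" "invertible N" "x = aff M w" "y = aff N z"
      unfolding carrier_Aff2 by blast
    thus "x \<otimes>\<^bsub>Aff2\<^esub> y \<in> carrier Aff2" unfolding carrier_Aff2 mult_Aff2 MN(3,4) aff_comp
      by (intro exI conjI) (rule invertible_mult[OF MN(1,2)], rule refl)
  qed
  show "\<one>\<^bsub>Aff2\<^esub> \<in> carrier Aff2" unfolding carrier_Aff2 one_Aff2 id_aff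
    by (intro exI conjI) (rule invertible_one, rule refl)
  show "\<And>x y z. x \<in> carrier Aff2 \<Longrightarrow> y \<in> carrier Aff2 \<Longrightarrow> z \<in> carrier Aff2 \<Longrightarrow>
      x \<otimes>\<^bsub>Aff2\<^esub> y \<otimes>\<^bsub>Aff2\<^esub> z = x \<otimes>\<^bsub>Aff2\<^esub> (y \<otimes>\<^bsub>Aff2\<^esub> z)"
    by (simp add: comp_assoc)
  show "\<And>x. x \<in> carrier Aff2 \<Longrightarrow> \<one>\<^bsub>Aff2\<^esub> \<otimes>\<^bsub>Aff2\<^esub> x = x"
    by simp
  fix x assume "x \<in> carrier Aff2"
  then obtain M w where M: "invertible M" "x = aff M w" unfolding carrier_Aff2 by blast
  then obtain M' where M': "M ** M' = mat 1" "M' ** M = mat 1" unfolding invertible_def by blast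
  have "aff M' (- (M' *v w)) \<in> carrier Aff2" unfolding carrier_Aff2 using invertibleI[OF M'(2,1)] by blast
  moreover have "aff M' (- (M' *v w)) \<circ> x = id"
    using M M' by (simp add: aff_comp id_aff)
  ultimately show "\<exists>y\<in>carrier Aff2. y \<otimes>\<^bsub>Aff2\<^esub> x = \<one>\<^bsub>Aff2\<^esub>"
    by auto
qed

lemma inv_Aff2: assumes "M ** M' = mat 1" "M' ** M = mat 1"
  shows "inv\<^bsub>Aff2\<^esub> (aff M w) = aff M' (- (M' *v w))"
proof -
  have c: "aff M w \<in> carrier Aff2" "aff M' (- (M' *v w)) \<in> carrier Aff2"
    unfolding carrier_Aff2 using invertibleI[OF assms] invertibleI[OF assms(2,1)] by blast+
  have "aff M' (- (M' *v w)) \<otimes>\<^bsub>Aff2\<^esub> aff M w = \<one>\<^bsub>Aff2\<^esub>"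
    using assms by (simp add: aff_comp id_aff)
  thus ?thesis using group.inv_equality[OF group_Aff2] c by blast
qed

lemma Lin_hom: "Lin \<in> hom Aff2 GL2"
  by (rule homI) (auto simp: carrier_Aff2 carrier_GL2 aff_comp invertible_mult)

lemma iota_hom: "(\<lambda>M. aff M 0) \<in> hom GL2 Aff2"
  by (rule homI) (auto simp: carrier_Aff2 carrier_GL2 aff_comp invertible_mult)

lemma gh_Lin: "group_hom Aff2 GL2 Lin"
  by (simp add: group_hom_def group_hom_axioms_def group_Aff2 group_GL2 Lin_hom)

lemma gh_iota: "group_hom GL2 Aff2 (\<lambda>M. aff M 0)"
  by (simp add: group_hom_def group_hom_axioms_def group_Aff2 group_GL2 iota_hom)


lemma vec2_eq: "(x::complex^2) = y \<longleftrightarrow> x$1 = y$1 \<and> x$2 = y$2"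
  by (simp add: vec_eq_iff forall_2)

lemma mv_smult: "(A::complex^2^2) *v (c *s x) = c *s (A *v x)"
  by (simp add: vec_eq_iff matrix_vector_mult_def sum_distrib_left mult_ac)

lemma mv2: "((A::complex^2^2) *v x)$i = A$i$1 * x$1 + A$i$2 * x$2"
  by (simp add: matrix_vector_mult_def sum_2)

lemma smult_cancel: "(u::complex^2) \<noteq> 0 \<Longrightarrow> c *s u = d *s u \<Longrightarrow> c = d"
  by (auto simp: vec2_eq)

definition det2 :: "complex^2 \<Rightarrow> complex^2 \<Rightarrow> complex" where
  "det2 u e = u$1 * e$2 - u$2 * e$1"

lemma aux_solve:
  fixes d u1 u2 e1 e2 x1 x2 :: complex
  assumes "d = u1*e2 - u2*e1" "d \<noteq> 0"
  shows "x1 = ((x1*e2 - x2*e1)/d)*u1 + ((u1*x2 - u2*x1)/d)*e1"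
    and "x2 = ((x1*e2 - x2*e1)/d)*u2 + ((u1*x2 - u2*x1)/d)*e2"
proof -
  have "((x1*e2 - x2*e1)/d)*u1 + ((u1*x2 - u2*x1)/d)*e1 = ((x1*e2 - x2*e1)*u1 + (u1*x2 - u2*x1)*e1)/d"
    by (simp add: add_divide_distrib)
  also have "(x1*e2 - x2*e1)*u1 + (u1*x2 - u2*x1)*e1 = x1 * d" unfolding assms(1) by (simp add: algebra_simps)
  finally show "x1 = ((x1*e2 - x2*e1)/d)*u1 + ((u1*x2 - u2*x1)/d)*e1" using assms(2) by simp
  have "((x1*e2 - x2*e1)/d)*u2 + ((u1*x2 - u2*x1)/d)*e2 = ((x1*e2 - x2*e1)*u2 + (u1*x2 - u2*x1)*e2)/d"
    by (simp add: add_divide_distrib)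
  also have "(x1*e2 - x2*e1)*u2 + (u1*x2 - u2*x1)*e2 = x2 * d" unfolding assms(1) by (simp add: algebra_simps)
  finally show "x2 = ((x1*e2 - x2*e1)/d)*u2 + ((u1*x2 - u2*x1)/d)*e2" using assms(2) by simp
qed

lemma span2:
  assumes "det2 u e \<noteq> 0"
  shows "\<exists>a b. x = a *s u + b *s e"
proof -
  let ?d = "det2 u e"
  have "x = ((x$1 * e$2 - x$2 * e$1) / ?d) *s u + ((u$1 * x$2 - u$2 * x$1) / ?d) *s e"
    using aux_solve[OF det2_def assms] unfolding vec2_eq by simp
  thus ?thesis by blast
qed

lemma exists_e: "(u::complex^2) \<noteq> 0 \<Longrightarrow> \<exists>e. det2 u e \<noteq> 0"
proof -
  assume u: "u \<noteq> 0"
  show ?thesis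
  proof (cases "u$1 = 0")
    case True
    hence "u$2 \<noteq> 0" using u by (auto simp: vec2_eq)
    hence "det2 u (vector [1, 0]) \<noteq> 0" using True by (simp add: det2_def)
    thus ?thesis by blast
  next
    case False
    hence "det2 u (vector [0, 1]) \<noteq> 0" by (simp add: det2_def)
    thus ?thesis by blast
  qed
qed

lemma det2_zero: "(u::complex^2) \<noteq> 0 \<Longrightarrow> det2 u r = 0 \<Longrightarrow> \<exists>c. r = c *s u"
proof -
  assume u: "u \<noteq> 0" and d: "det2 u r = 0"
  show ?thesis
  proof (cases "u$1 = 0")
    case True
    hence u2: "u$2 \<noteq> 0" using u by (auto simp: vec2_eq)
    have "r = (r$2 / u$2) *s u" using True u2 d unfolding vec2_eq det2_def by (simp add: field_simps)
    thus ?thesis by blast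
  next
    case False
    have "r = (r$1 / u$1) *s u" using False d unfolding vec2_eq det2_def
      by (simp add: field_simps)
    thus ?thesis by blast
  qed
qed


definition chi :: "complex^2 \<Rightarrow> complex^2^2 \<Rightarrow> complex" where
  "chi u h = (SOME c. h *v u = c *s u)"

lemma cyclic_case:
  assumes H: "subgroup H GL2" and fin: "finite H" and u: "u \<noteq> 0"
    and lin: "\<forall>h\<in>H. \<forall>w. \<exists>c. h *v w - w = c *s u"
  shows "cyclic_group (subgroup_generated GL2 H)"
proof -
  interpret G: group GL2 by (rule group_GL2)
  have HC: "H \<subseteq> carrier GL2" using subgroup.subset[OF H] .
  have mc: "g ** h \<in> H" if "g \<in> H" "h \<in> H" for g h
    using subgroup.m_closed[OF H that] by simp
  have one: "mat 1 \<in> H" using subgroup.one_closed[OF H] by simp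
  have vlin: "h *v w = w + c *s u" if "h *v w - w = c *s u" for h w c
    using that by (metis add.commute diff_add_cancel)
  have eig: "h *v u = chi u h *s u" if h: "h \<in> H" for h
  proof -
    obtain c where "h *v u - u = c *s u" using lin h by blast
    hence "h *v u = (1 + c) *s u" using vlin by (simp add: vec2_eq algebra_simps)
    hence "\<exists>c. h *v u = c *s u" by blast
    thus ?thesis unfolding chi_def by (rule someI_ex)
  qed
  have chi_eq: "chi u h = c" if "h \<in> H" "h *v u = c *s u" for h c
    using eig[OF that(1)] that(2) smult_cancel[OF u] by metis
  have chi_mult: "chi u (g ** h) = chi u g * chi u h" if g: "g \<in> H" and h: "h \<in> H" for g h
  proof (rule chi_eq[OF mc[OF g h]])
    have "(g ** h) *v u = g *v (h *v u)" by (simp add: matrix_vector_mul_assoc)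
    also have "\<dots> = chi u h *s (chi u g *s u)" using eig[OF g] eig[OF h] by (simp add: mv_smult)
    finally show "(g ** h) *v u = (chi u g * chi u h) *s u" by (simp add: vector_smult_assoc mult.commute)
  qed
  have chi_one: "chi u (mat 1) = 1" using chi_eq[OF one] by simp
  have powH: "h [^]\<^bsub>GL2\<^esub> n \<in> H \<and> chi u (h [^]\<^bsub>GL2\<^esub> n) = chi u h ^ n" if h: "h \<in> H" for h n
  proof (induction n)
    case 0 thus ?case using one chi_one by simp
  next
    case (Suc n) thus ?case using mc[OF _ h] chi_mult[OF _ h] by simp
  qed
  define K where "K = subgroup_generated GL2 H"
  have gK: "group K" unfolding K_def by simp
  have cK: "carrier K = H" unfolding K_def using subgroup.carrier_subgroup_generated_subgroup[OF H] by simp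
  define n where "n = card H"
  have npos: "n > 0" unfolding n_def using fin one card_gt_0_iff by blast
  have pn: "h [^]\<^bsub>GL2\<^esub> n = mat 1" if h: "h \<in> H" for h
  proof -
    have "h [^]\<^bsub>K\<^esub> order K = \<one>\<^bsub>K\<^esub>" using group.pow_order_eq_1[OF gK] h cK by blast
    thus ?thesis unfolding K_def order_def n_def using cK[unfolded K_def]
      by (simp add: pow_subgroup_generated)
  qed
  have kill: "k = mat 1" if k: "k \<in> H" and ck: "chi u k = 1" for k
  proof -
    obtain e where e: "det2 u e \<noteq> 0" using exists_e[OF u] by blast
    obtain c where c: "k *v e - e = c *s u" using lin k by blast
    have ke: "k *v e = e + c *s u" using vlin[OF c] .
    have ku: "k *v u = u" using eig[OF k] ck by simp
    have pw: "(k [^]\<^bsub>GL2\<^esub> m) *v e = e + (of_nat m * c) *s u \<and> (k [^]\<^bsub>GL2\<^esub> m) *v u = u" for m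
    proof (induction m)
      case 0 thus ?case by simp
    next
      case (Suc m)
      have "(k [^]\<^bsub>GL2\<^esub> Suc m) *v e = (k [^]\<^bsub>GL2\<^esub> m) *v (k *v e)"
        by (simp add: matrix_vector_mul_assoc)
      also have "\<dots> = e + (of_nat m * c) *s u + c *s u"
        using Suc ke by (simp add: matrix_vector_right_distrib mv_smult)
      also have "\<dots> = e + (of_nat (Suc m) * c) *s u" by (simp add: vec2_eq algebra_simps)
      finally have 1: "(k [^]\<^bsub>GL2\<^esub> Suc m) *v e = e + (of_nat (Suc m) * c) *s u" .
      have "(k [^]\<^bsub>GL2\<^esub> Suc m) *v u = (k [^]\<^bsub>GL2\<^esub> m) *v (k *v u)"
        by (simp add: matrix_vector_mul_assoc)
      thus ?case using 1 Suc ku by simp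
    qed
    have "e = e + (of_nat n * c) *s u" using pw[of n] pn[OF k] by simp
    hence "(of_nat n * c) *s u = 0 *s u" by simp
    hence "of_nat n * c = 0" using smult_cancel[OF u] by blast
    hence c0: "c = 0" using npos by simp
    have "k *v x = mat 1 *v x" for x
    proof -
      obtain a b where x: "x = a *s u + b *s e" using span2[OF e] by blast
      show ?thesis unfolding x using ke ku c0 by (simp add: matrix_vector_right_distrib mv_smult)
    qed
    thus ?thesis using matrix_eq by blast
  qed
  have inj: "inj_on (chi u) H"
  proof (rule inj_onI)
    fix g h assume g: "g \<in> H" and h: "h \<in> H" and gh: "chi u g = chi u h"
    have gc: "g \<in> carrier GL2" using HC g by blast
    have hc: "h \<in> carrier GL2" using HC h by blast
    have ig: "inv\<^bsub>GL2\<^esub> g \<in> H" using subgroup.m_inv_closed[OF H g] .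
    have "inv\<^bsub>GL2\<^esub> g ** g = mat 1" using G.l_inv[OF gc] by simp
    hence "chi u (inv\<^bsub>GL2\<^esub> g) * chi u g = 1" using chi_mult[OF ig g] chi_one by simp
    hence "chi u (inv\<^bsub>GL2\<^esub> g ** h) = 1" using chi_mult[OF ig h] gh by simp
    hence k1: "inv\<^bsub>GL2\<^esub> g ** h = mat 1" using kill mc[OF ig h] by blast
    have gi: "g ** inv\<^bsub>GL2\<^esub> g = mat 1" using G.r_inv[OF gc] by simp
    have "h = g ** (inv\<^bsub>GL2\<^esub> g ** h)" by (simp add: matrix_mul_assoc gi)
    thus "g = h" using k1 by simp
  qed
  have rootH: "chi u h ^ n = 1" if h: "h \<in> H" for h
    using powH[OF h, of n] pn[OF h] chi_one by simp
  have cardim: "card (chi u ` H) = n" unfolding n_def using card_image[OF inj] .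
  have finR: "finite {z::complex. z ^ n = 1}" using finite_roots_unity[of n] npos by simp
  have im: "chi u ` H = {z::complex. z ^ n = 1}"
    using card_subset_eq[OF finR, of "chi u ` H"] rootH cardim card_roots_unity_eq[OF npos] by auto
  define \<omega> where "\<omega> = cis (2 * pi / real n)"
  have wpow: "\<omega> ^ k = cis (2 * pi * real k / real n)" for k
  proof -
    have "\<omega> ^ k = cis (real k * (2 * pi / real n))" unfolding \<omega>_def by (rule Complex.DeMoivre)
    also have "real k * (2 * pi / real n) = 2 * pi * real k / real n" by simp
    finally show ?thesis .
  qed
  have "\<omega> ^ n = 1" using wpow[of n] npos by simp
  then obtain g where g: "g \<in> H" "chi u g = \<omega>" using im by (metis (mono_tags, lifting) imageE mem_Collect_eq)
  have gen: "\<exists>k. h = g [^]\<^bsub>GL2\<^esub> (k::nat)" if h: "h \<in> H" for h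
  proof -
    have "chi u h \<in> {z::complex. z ^ n = 1}" using rootH[OF h] by simp
    then obtain k where "chi u h = cis (2 * pi * real k / real n)"
      using bij_betw_imp_surj_on[OF Complex.bij_betw_roots_unity[OF npos]] by blast
    hence "chi u h = chi u (g [^]\<^bsub>GL2\<^esub> k)" using powH[OF g(1), of k] g(2) wpow by simp
    hence "h = g [^]\<^bsub>GL2\<^esub> k" using inj h powH[OF g(1), of k] by (meson inj_onD)
    thus ?thesis by blast
  qed
  have "carrier K = range (\<lambda>m::int. g [^]\<^bsub>K\<^esub> m)"
  proof
    show "range (\<lambda>m::int. g [^]\<^bsub>K\<^esub> m) \<subseteq> carrier K"
      using group.int_pow_closed[OF gK] g(1) cK by blast
    show "carrier K \<subseteq> range (\<lambda>m::int. g [^]\<^bsub>K\<^esub> m)"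
    proof
      fix h assume "h \<in> carrier K"
      then obtain k where "h = g [^]\<^bsub>GL2\<^esub> (k::nat)" using gen cK by blast
      hence "h = g [^]\<^bsub>K\<^esub> (int k)" unfolding K_def by (simp add: int_pow_int pow_subgroup_generated)
      thus "h \<in> range (\<lambda>m::int. g [^]\<^bsub>K\<^esub> m)" by blast
    qed
  qed
  hence "cyclic_group K" using group.cyclic_group[OF gK] g(1) cK by blast
  thus ?thesis unfolding K_def .
qed


lemma span_R:
  assumes H: "subgroup H GL2" and fin: "finite H" and nc: "\<not> cyclic_group (subgroup_generated GL2 H)"
  shows "\<exists>h1\<in>H. \<exists>h2\<in>H. \<exists>w1 w2. x = (h1 *v w1 - w1) + (h2 *v w2 - w2)"
proof (rule ccontr)
  assume nx: "\<not> ?thesis"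
  show False
  proof (cases "\<forall>h\<in>H. \<forall>w. h *v w - w = 0")
    case True
    have u: "(vector [1, 0] :: complex^2) \<noteq> 0" by (simp add: vec2_eq)
    have "\<forall>h\<in>H. \<forall>w. \<exists>c. h *v w - w = c *s (vector [1, 0] :: complex^2)"
      using True by (metis vector_smult_lzero)
    thus False using cyclic_case[OF H fin u] nc by blast
  next
    case False
    then obtain h0 w0 where h0: "h0 \<in> H" and u: "h0 *v w0 - w0 \<noteq> 0" by blast
    define u where "u = h0 *v w0 - w0"
    have "\<forall>h\<in>H. \<forall>w. \<exists>c. h *v w - w = c *s u"
    proof (intro ballI allI)
      fix h w assume h: "h \<in> H"
      show "\<exists>c. h *v w - w = c *s u"
      proof (cases "det2 u (h *v w - w) = 0")
        case True thus ?thesis using det2_zero u unfolding u_def by blast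
      next
        case False
        then obtain a b where ab: "x = a *s u + b *s (h *v w - w)" using span2 by blast
        have "x = (h0 *v (a *s w0) - a *s w0) + (h *v (b *s w) - b *s w)"
          unfolding ab u_def mv_smult by (simp add: vec2_eq algebra_simps)
        hence False using nx h0 h by blast
        thus ?thesis ..
      qed
    qed
    thus False using cyclic_case[OF H fin] u nc unfolding u_def by blast
  qed
qed

lemma Lpre_sub: "Lpre H \<subseteq> carrier Aff2"
  by (auto simp: Lpre_def)

lemma commut_trans:
  assumes H: "subgroup H GL2" and h: "h \<in> H"
  shows "aff (mat 1) (h *v w - w) \<in> derived Aff2 (Lpre H)"
proof -
  have hi: "invertible h" using subgroup.subset[OF H] h by (auto simp: carrier_GL2)
  then obtain h' where h': "h ** h' = mat 1" "h' ** h = mat 1" unfolding invertible_def by blast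
  have one: "mat 1 \<in> H" using subgroup.one_closed[OF H] by simp
  have a: "aff h 0 \<in> Lpre H" using hi h by (auto simp: Lpre_def carrier_Aff2)
  have b: "aff (mat 1) w \<in> Lpre H" using one invertible_one by (auto simp: Lpre_def carrier_Aff2)
  have ia: "inv\<^bsub>Aff2\<^esub> (aff h 0) = aff h' 0" using inv_Aff2[OF h'] by simp
  have ib: "inv\<^bsub>Aff2\<^esub> (aff (mat 1) w) = aff (mat 1) (- w)" using inv_Aff2[of "mat 1" "mat 1" w] by simp
  have "aff h 0 \<otimes>\<^bsub>Aff2\<^esub> aff (mat 1) w \<otimes>\<^bsub>Aff2\<^esub> inv\<^bsub>Aff2\<^esub> (aff h 0) \<otimes>\<^bsub>Aff2\<^esub> inv\<^bsub>Aff2\<^esub> (aff (mat 1) w)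
        = aff (mat 1) (h *v w - w)"
    unfolding ia ib mult_Aff2 aff_comp using h' by (simp add: matrix_mul_assoc matrix_vector_right_distrib)
  moreover have "aff h 0 \<otimes>\<^bsub>Aff2\<^esub> aff (mat 1) w \<otimes>\<^bsub>Aff2\<^esub> inv\<^bsub>Aff2\<^esub> (aff h 0) \<otimes>\<^bsub>Aff2\<^esub> inv\<^bsub>Aff2\<^esub> (aff (mat 1) w)
        \<in> derived_set Aff2 (Lpre H)" by (rule UN_I[OF a], rule UN_I[OF b]) simp
  ultimately show ?thesis unfolding derived_def using generate.incl[of _ "derived_set Aff2 (Lpre H)" Aff2] by simp
qed

lemma trans_all:
  assumes "subgroup H GL2" and "finite H" and "\<not> cyclic_group (subgroup_generated GL2 H)"
  shows "aff (mat 1) x \<in> derived Aff2 (Lpre H)"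
proof -
  obtain h1 h2 w1 w2 where hw: "h1 \<in> H" "h2 \<in> H" "x = (h1 *v w1 - w1) + (h2 *v w2 - w2)"
    using span_R[OF assms] by blast
  have sg: "subgroup (derived Aff2 (Lpre H)) Aff2"
    using group.derived_is_subgroup[OF group_Aff2 Lpre_sub] .
  have "aff (mat 1) (h1 *v w1 - w1) \<otimes>\<^bsub>Aff2\<^esub> aff (mat 1) (h2 *v w2 - w2) \<in> derived Aff2 (Lpre H)"
    using subgroup.m_closed[OF sg commut_trans[OF assms(1) hw(1)] commut_trans[OF assms(1) hw(2)]] .
  thus ?thesis unfolding mult_Aff2 aff_comp hw(3) by (simp add: add.commute)
qed

theorem lemma3p20:
  assumes "subgroup H GL2"
    and "finite H"
    and "\<not> cyclic_group (subgroup_generated GL2 H)"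
  shows "derived Aff2 (Lpre H) = Lpre (derived GL2 H)"
proof
  have HC: "H \<subseteq> carrier GL2" using subgroup.subset[OF assms(1)] .
  have LH: "Lin ` Lpre H = H"
  proof
    show "Lin ` Lpre H \<subseteq> H" by (auto simp: Lpre_def)
    show "H \<subseteq> Lin ` Lpre H"
    proof
      fix h assume h: "h \<in> H"
      have "invertible h" using HC h carrier_GL2 by blast
      hence "aff h 0 \<in> Lpre H" using h by (auto simp: Lpre_def carrier_Aff2)
      thus "h \<in> Lin ` Lpre H" by (metis Lin_aff image_eqI)
    qed
  qed
  have img: "Lin ` derived Aff2 (Lpre H) = derived GL2 H"
    using group_hom.derived_img[OF gh_Lin Lpre_sub[of H]] LH by simp
  show "derived Aff2 (Lpre H) \<subseteq> Lpre (derived GL2 H)"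
  proof
    fix f assume f: "f \<in> derived Aff2 (Lpre H)"
    have "f \<in> carrier Aff2" using group.derived_in_carrier[OF group_Aff2 Lpre_sub] f by blast
    moreover have "Lin f \<in> derived GL2 H" using img f by blast
    ultimately show "f \<in> Lpre (derived GL2 H)" by (simp add: Lpre_def)
  qed
  show "Lpre (derived GL2 H) \<subseteq> derived Aff2 (Lpre H)"
  proof
    fix f assume f: "f \<in> Lpre (derived GL2 H)"
    then obtain M w where Mw: "invertible M" "f = aff M w" by (auto simp: Lpre_def carrier_Aff2)
    have M: "M \<in> derived GL2 H" using f Mw by (simp add: Lpre_def)
    have "(\<lambda>M. aff M 0) ` H \<subseteq> Lpre H"
    proof
      fix g assume "g \<in> (\<lambda>M. aff M 0) ` H"
      then obtain h where h: "h \<in> H" "g = aff h 0" by blast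
      have "invertible h" using HC h carrier_GL2 by blast
      thus "g \<in> Lpre H" using h by (auto simp: Lpre_def carrier_Aff2)
    qed
    hence "derived Aff2 ((\<lambda>M. aff M 0) ` H) \<subseteq> derived Aff2 (Lpre H)"
      using group.mono_derived[OF group_Aff2] by blast
    moreover have "derived Aff2 ((\<lambda>M. aff M 0) ` H) = (\<lambda>M. aff M 0) ` derived GL2 H"
      using group_hom.derived_img[OF gh_iota HC] .
    ultimately have a: "aff M 0 \<in> derived Aff2 (Lpre H)" using M by blast
    have sg: "subgroup (derived Aff2 (Lpre H)) Aff2"
      using group.derived_is_subgroup[OF group_Aff2 Lpre_sub] .
    have "aff (mat 1) w \<otimes>\<^bsub>Aff2\<^esub> aff M 0 \<in> derived Aff2 (Lpre H)"
      using subgroup.m_closed[OF sg trans_all[OF assms] a] .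
    thus "f \<in> derived Aff2 (Lpre H)" unfolding mult_Aff2 aff_comp Mw by simp
  qed
qed

end
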